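(* Let $\mu$ be a Borel probability measure on a standard Borel space $X$ and let $\phi$ be a continuous unitary representation of $L^0(\mu,\mathbb T)$ on a separable complex Hilbert space. Then there is a finite Borel measure $\nu$ on $X$ such that: (i) $\nu\ll\mu$ and $\phi$ is the composition of the natural homomorphism $L^0(\mu,\mathbb T)\to L^0(\nu,\mathbb T)$ with a continuous unitary representation of $L^0(\nu,\mathbb T)$; (ii) whenever $\nu'$ is a finite Borel measure on $X$ with $\nu'\ll\mu$ such that $\phi$ is the composition of the natural homomorphism $L^0(\mu,\mathbb T)\to L^0(\nu',\mathbb T)$ with a continuous unitary representation of $L^0(\nu',\mathbb T)$, we have $\nu\ll\nu'$.
   Context: $\mathbb T$ is the unit circle in $\mathbb C$. $L^0(\mu,\mathbb T)$ is the group of $\mu$-equivalence classes of measurable functions $X\to\mathbb T$ with pointwise multiplication and the topology of convergence in measure. If $\nu\ll\mu$ are finite Borel measures, the natural homomorphism $L^0(\mu,\mathbb T)\to L^0(\nu,\mathbb T)$ sends the $\mu$-class of a Borel function to its $\nu$-class (well defined since the $\nu$-class contains the $\mu$-class). Unitary representations are strongly continuous. *)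

theory Defs
  imports "HOL-Probability.Probability"
begin

section \<open>Separable complex Hilbert spaces, modelled as l2(I) with I a subset of nat\<close>

definition l2 :: "nat set \<Rightarrow> (nat \<Rightarrow> complex) set" where
  "l2 I = {x. (\<forall>n. n \<notin> I \<longrightarrow> x n = 0) \<and> summable (\<lambda>n. (cmod (x n))\<^sup>2)}"

definition l2inner :: "(nat \<Rightarrow> complex) \<Rightarrow> (nat \<Rightarrow> complex) \<Rightarrow> complex" where
  "l2inner x y = (\<Sum>n. cnj (x n) * y n)"

definition l2norm :: "(nat \<Rightarrow> complex) \<Rightarrow> real" where
  "l2norm x = sqrt (\<Sum>n. (cmod (x n))\<^sup>2)"

definition unitary_on :: "nat set \<Rightarrow> ((nat \<Rightarrow> complex) \<Rightarrow> (nat \<Rightarrow> complex)) \<Rightarrow> bool" where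
  "unitary_on I U \<longleftrightarrow>
     bij_betw U (l2 I) (l2 I) \<and>
     (\<forall>x\<in>l2 I. \<forall>y\<in>l2 I. \<forall>a b. U (\<lambda>n. a * x n + b * y n) = (\<lambda>n. a * U x n + b * U y n)) \<and>
     (\<forall>x\<in>l2 I. \<forall>y\<in>l2 I. l2inner (U x) (U y) = l2inner x y)"

text \<open>Representatives: Borel functions X \<rightarrow> T (unit circle); classes are taken modulo M-a.e. equality.\<close>
definition Tfun :: "'a measure \<Rightarrow> ('a \<Rightarrow> complex) set" where
  "Tfun M = {f \<in> borel_measurable M. \<forall>x\<in>space M. cmod (f x) = 1}"

definition conv_in_measure :: "'a measure \<Rightarrow> (nat \<Rightarrow> 'a \<Rightarrow> complex) \<Rightarrow> ('a \<Rightarrow> complex) \<Rightarrow> bool" where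
  "conv_in_measure M fs f \<longleftrightarrow>
     (\<forall>e>0. (\<lambda>k. measure M {x\<in>space M. cmod (fs k x - f x) > e}) \<longlonglongrightarrow> 0)"

text \<open>A strongly continuous unitary representation of L^0(M,T) on l2(I), given on representatives.
  Since L^0(M,T) is metrizable for finite M, continuity is expressed sequentially.\<close>
definition cont_unitary_rep ::
  "'a measure \<Rightarrow> nat set \<Rightarrow> (('a \<Rightarrow> complex) \<Rightarrow> (nat \<Rightarrow> complex) \<Rightarrow> (nat \<Rightarrow> complex)) \<Rightarrow> bool" where
  "cont_unitary_rep M I \<phi> \<longleftrightarrow>
     (\<forall>f\<in>Tfun M. \<forall>g\<in>Tfun M. (AE x in M. f x = g x) \<longrightarrow> (\<forall>v\<in>l2 I. \<phi> f v = \<phi> g v)) \<and>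
     (\<forall>f\<in>Tfun M. unitary_on I (\<phi> f)) \<and>
     (\<forall>f\<in>Tfun M. \<forall>g\<in>Tfun M. \<forall>v\<in>l2 I. \<phi> (\<lambda>x. f x * g x) v = \<phi> f (\<phi> g v)) \<and>
     (\<forall>fs f v. (\<forall>k. fs k \<in> Tfun M) \<longrightarrow> f \<in> Tfun M \<longrightarrow> conv_in_measure M fs f \<longrightarrow> v \<in> l2 I \<longrightarrow>
        (\<lambda>k. l2norm (\<lambda>n. \<phi> (fs k) v n - \<phi> f v n)) \<longlonglongrightarrow> 0)"

definition factors_through ::
  "'a measure \<Rightarrow> 'a measure \<Rightarrow> nat set \<Rightarrow> (('a \<Rightarrow> complex) \<Rightarrow> (nat \<Rightarrow> complex) \<Rightarrow> (nat \<Rightarrow> complex)) \<Rightarrow> bool" where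
  "factors_through \<mu> \<nu> I \<phi> \<longleftrightarrow>
     (\<exists>\<psi>. cont_unitary_rep \<nu> I \<psi> \<and> (\<forall>f\<in>Tfun \<mu>. \<forall>v\<in>l2 I. \<phi> f v = \<psi> f v))"

end

theory Submission
  imports Defs
begin


lemma Tfun_cong: "sets M = sets N \<Longrightarrow> Tfun M = Tfun N"
  proof -
  assume a: "sets M = sets N"
  have "borel_measurable M = (borel_measurable N :: ('a \<Rightarrow> complex) set)" by (rule measurable_cong_sets[OF a refl])
  thus ?thesis unfolding Tfun_def using sets_eq_imp_space_eq[OF a] by simp
qed

lemma Tfun_mult: "f \<in> Tfun M \<Longrightarrow> g \<in> Tfun M \<Longrightarrow> (\<lambda>x. f x * g x) \<in> Tfun M"
  unfolding Tfun_def by (auto simp: norm_mult)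

lemma Tfun_cnj: "f \<in> Tfun M \<Longrightarrow> (\<lambda>x. cnj (f x)) \<in> Tfun M"
  unfolding Tfun_def by (auto intro: borel_measurable_continuous_on[OF continuous_on_cnj[OF continuous_on_id]])

lemma Tfun_one: "(\<lambda>x. 1) \<in> Tfun M"
  unfolding Tfun_def by auto

lemma Tfun_if: "A \<in> sets M \<Longrightarrow> f \<in> Tfun M \<Longrightarrow> g \<in> Tfun M \<Longrightarrow> (\<lambda>x. if x \<in> A then f x else g x) \<in> Tfun M"
  unfolding Tfun_def by (auto intro!: measurable_If_set)

lemma unit_cnj: "cmod z = 1 \<Longrightarrow> z * cnj z = 1"
  using complex_norm_square[of z] by simp

lemma rep_one:
  assumes "cont_unitary_rep M I \<phi>" "v \<in> l2 I"
  shows "\<phi> (\<lambda>x. 1) v = v"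
proof -
  have u: "unitary_on I (\<phi> (\<lambda>x. 1))" using assms Tfun_one unfolding cont_unitary_rep_def by blast
  have h: "\<forall>f\<in>Tfun M. \<forall>g\<in>Tfun M. \<forall>v\<in>l2 I. \<phi> (\<lambda>x. f x * g x) v = \<phi> f (\<phi> g v)"
    using assms(1) unfolding cont_unitary_rep_def by blast
  have m: "\<phi> (\<lambda>x. 1) v = \<phi> (\<lambda>x. 1) (\<phi> (\<lambda>x. 1) v)" using h[rule_format, OF Tfun_one Tfun_one assms(2)] unfolding mult_1 .
  have b: "bij_betw (\<phi> (\<lambda>x. 1)) (l2 I) (l2 I)" using u unfolding unitary_on_def by blast
  have "\<phi> (\<lambda>x. 1) v \<in> l2 I" using bij_betw_apply[OF b assms(2)] .
  moreover have inj: "inj_on (\<phi> (\<lambda>x. 1)) (l2 I)" using b by (simp add: bij_betw_def)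
  ultimately show ?thesis using inj_onD[OF inj, of "\<phi> (\<lambda>x. 1) v" v] m assms(2) by argo
qed

lemma rep_l2:
  assumes "cont_unitary_rep M I \<phi>" "f \<in> Tfun M" "v \<in> l2 I"
  shows "\<phi> f v \<in> l2 I"
  using assms proof -
  have "unitary_on I (\<phi> f)" using assms unfolding cont_unitary_rep_def by blast
  thus ?thesis using assms(3) unfolding unitary_on_def using bij_betw_imp_surj_on by blast
qed

lemma l2_diff_summable:
  assumes "x \<in> l2 I" "y \<in> l2 I"
  shows "summable (\<lambda>n. (cmod (x n - y n))\<^sup>2)"
proof (rule summable_comparison_test)
  have "summable (\<lambda>n. (cmod (x n))\<^sup>2)" "summable (\<lambda>n. (cmod (y n))\<^sup>2)" using assms by (auto simp: l2_def)
  then show "summable (\<lambda>n. 2 * (cmod (x n))\<^sup>2 + 2 * (cmod (y n))\<^sup>2)"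
    by (intro summable_add summable_mult)
  show "\<exists>N. \<forall>n\<ge>N. norm ((cmod (x n - y n))\<^sup>2) \<le> 2 * (cmod (x n))\<^sup>2 + 2 * (cmod (y n))\<^sup>2"
  proof (intro exI allI impI)
    fix n
    have "cmod (x n - y n) \<le> cmod (x n) + cmod (y n)" by (rule norm_triangle_ineq4)
    hence "(cmod (x n - y n))\<^sup>2 \<le> (cmod (x n) + cmod (y n))\<^sup>2" by (simp add: power_mono)
    also have "\<dots> \<le> 2 * (cmod (x n))\<^sup>2 + 2 * (cmod (y n))\<^sup>2"
    proof -
      have "0 \<le> (cmod (x n) - cmod (y n))\<^sup>2" by simp
      thus ?thesis by (simp add: power2_sum power2_diff)
    qed
    finally show "norm ((cmod (x n - y n))\<^sup>2) \<le> 2 * (cmod (x n))\<^sup>2 + 2 * (cmod (y n))\<^sup>2" by simp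
  qed
qed

lemma l2norm_zero:
  assumes "x \<in> l2 I" "y \<in> l2 I" "l2norm (\<lambda>n. x n - y n) = 0"
  shows "x = y"
proof -
  have s: "summable (\<lambda>n. (cmod (x n - y n))\<^sup>2)" by (rule l2_diff_summable[OF assms(1,2)])
  have "(\<Sum>n. (cmod (x n - y n))\<^sup>2) = 0" using assms(3) unfolding l2norm_def
    by (metis real_sqrt_eq_zero_cancel_iff)
  hence "\<forall>n. (cmod (x n - y n))\<^sup>2 = 0" using suminf_eq_zero_iff[OF s] by auto
  thus ?thesis by auto
qed



definition nullrep :: "'a measure \<Rightarrow> nat set \<Rightarrow> (('a \<Rightarrow> complex) \<Rightarrow> (nat \<Rightarrow> complex) \<Rightarrow> (nat \<Rightarrow> complex)) \<Rightarrow> 'a set \<Rightarrow> bool" where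
  "nullrep M I \<phi> A \<longleftrightarrow> A \<in> sets M \<and>
     (\<forall>f\<in>Tfun M. (\<forall>x\<in>space M. x \<notin> A \<longrightarrow> f x = 1) \<longrightarrow> (\<forall>v\<in>l2 I. \<phi> f v = v))"

context
  fixes M :: "'a measure" and I \<phi>
  assumes R: "cont_unitary_rep M I \<phi>" and F: "finite_measure M"
begin

lemma R_ae: "f \<in> Tfun M \<Longrightarrow> g \<in> Tfun M \<Longrightarrow> (AE x in M. f x = g x) \<Longrightarrow> v \<in> l2 I \<Longrightarrow> \<phi> f v = \<phi> g v"
  using R unfolding cont_unitary_rep_def by blast

lemma R_mult: "f \<in> Tfun M \<Longrightarrow> g \<in> Tfun M \<Longrightarrow> v \<in> l2 I \<Longrightarrow> \<phi> (\<lambda>x. f x * g x) v = \<phi> f (\<phi> g v)"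
  using R unfolding cont_unitary_rep_def by blast

lemma R_cont: "(\<And>k. fs k \<in> Tfun M) \<Longrightarrow> f \<in> Tfun M \<Longrightarrow> conv_in_measure M fs f \<Longrightarrow> v \<in> l2 I \<Longrightarrow>
        (\<lambda>k. l2norm (\<lambda>n. \<phi> (fs k) v n - \<phi> f v n)) \<longlonglongrightarrow> 0"
  using R unfolding cont_unitary_rep_def by blast

lemma nullrep_null: assumes "A \<in> null_sets M" shows "nullrep M I \<phi> A"
  unfolding nullrep_def
proof (intro conjI ballI impI)
  show "A \<in> sets M" using assms by auto
  fix f v assume f: "f \<in> Tfun M" and h: "\<forall>x\<in>space M. x \<notin> A \<longrightarrow> f x = 1" and v: "v \<in> l2 I"
  have "AE x in M. f x = 1" by (rule AE_I'[OF assms]) (use h in auto)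
  hence "\<phi> f v = \<phi> (\<lambda>x. 1) v" using R_ae[OF f Tfun_one _ v] by simp
  thus "\<phi> f v = v" using rep_one[OF R v] by simp
qed

lemma nullrep_empty: "nullrep M I \<phi> {}"
  by (rule nullrep_null) auto

lemma nullrep_mono: "nullrep M I \<phi> C \<Longrightarrow> B \<subseteq> C \<Longrightarrow> B \<in> sets M \<Longrightarrow> nullrep M I \<phi> B"
  unfolding nullrep_def by blast

lemma nullrep_Un: assumes A: "nullrep M I \<phi> A" and B: "nullrep M I \<phi> B" shows "nullrep M I \<phi> (A \<union> B)"
  unfolding nullrep_def
proof (intro conjI ballI impI)
  have As: "A \<in> sets M" and Bs: "B \<in> sets M" using A B by (auto simp: nullrep_def)
  thus "A \<union> B \<in> sets M" by auto
  fix f v assume f: "f \<in> Tfun M" and h: "\<forall>x\<in>space M. x \<notin> A \<union> B \<longrightarrow> f x = 1" and v: "v \<in> l2 I"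
  define g where "g = (\<lambda>x. if x \<in> A then f x else 1)"
  define k where "k = (\<lambda>x. if x \<in> A then 1 else f x)"
  have g: "g \<in> Tfun M" unfolding g_def by (rule Tfun_if[OF As f Tfun_one])
  have k: "k \<in> Tfun M" unfolding k_def by (rule Tfun_if[OF As Tfun_one f])
  have fe: "(\<lambda>x. g x * k x) = f" unfolding g_def k_def by auto
  have k1: "\<phi> k v = v" using B k h v unfolding nullrep_def k_def by auto
  have g1: "\<phi> g v = v" using A g h v unfolding nullrep_def g_def by auto
  have "\<phi> f v = \<phi> g (\<phi> k v)" using R_mult[OF g k v] fe by simp
  thus "\<phi> f v = v" using k1 g1 by simp
qed

lemma nullrep_fin: "(\<And>n. nullrep M I \<phi> (A n)) \<Longrightarrow> nullrep M I \<phi> (\<Union>i<(k::nat). A i)"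
proof (induction k)
  case 0 thus ?case using nullrep_empty by simp
next
  case (Suc k)
  have "(\<Union>i<Suc k. A i) = (\<Union>i<k. A i) \<union> A k" by (auto simp: lessThan_Suc)
  thus ?case using nullrep_Un Suc by simp
qed

lemma nullrep_UN: assumes A: "\<And>n::nat. nullrep M I \<phi> (A n)" shows "nullrep M I \<phi> (\<Union>n. A n)"
  unfolding nullrep_def
proof (intro conjI ballI impI)
  interpret finite_measure M by (rule F)
  have As: "\<And>n. A n \<in> sets M" using A by (auto simp: nullrep_def)
  thus U: "(\<Union>n. A n) \<in> sets M" by (intro sets.countable_UN) auto
  fix f v assume f: "f \<in> Tfun M" and h: "\<forall>x\<in>space M. x \<notin> (\<Union>n. A n) \<longrightarrow> f x = 1" and v: "v \<in> l2 I"
  define Fk where "Fk = (\<lambda>k. \<Union>i<k. A i)"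
  have Fs: "\<And>k. Fk k \<in> sets M" unfolding Fk_def using As by auto
  define fs where "fs = (\<lambda>k x. if x \<in> Fk k then f x else 1)"
  have fsT: "\<And>k. fs k \<in> Tfun M" unfolding fs_def by (rule Tfun_if[OF Fs f Tfun_one])
  have fs1: "\<And>k. \<phi> (fs k) v = v"
  proof -
    fix k
    have "nullrep M I \<phi> (Fk k)" unfolding Fk_def by (rule nullrep_fin[OF A])
    thus "\<phi> (fs k) v = v" using fsT v unfolding nullrep_def fs_def by auto
  qed
  have fm: "f \<in> borel_measurable M" using f by (simp add: Tfun_def)
  have conv: "conv_in_measure M fs f"
    unfolding conv_in_measure_def
  proof (intro allI impI)
    fix e :: real assume e: "e > 0"
    have lim: "(\<lambda>k. measure M ((\<Union>n. A n) - Fk k)) \<longlonglongrightarrow> measure M (\<Inter>k. (\<Union>n. A n) - Fk k)"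
    proof (rule finite_Lim_measure_decseq)
      show "range (\<lambda>k. (\<Union>n. A n) - Fk k) \<subseteq> sets M" using U Fs by auto
      show "decseq (\<lambda>k. (\<Union>n. A n) - Fk k)" unfolding decseq_def Fk_def by auto
    qed
    have "(\<Inter>k. (\<Union>n. A n) - Fk k) = {}"
    proof -
      { fix x assume x: "\<forall>k. x \<in> (\<Union>n. A n) - Fk k"
        then obtain n where n: "x \<in> A n" by blast
        from x have "x \<notin> Fk (Suc n)" by blast
        with n have False unfolding Fk_def by auto }
      thus ?thesis by blast
    qed
    with lim have lim0: "(\<lambda>k. measure M ((\<Union>n. A n) - Fk k)) \<longlonglongrightarrow> 0" by (simp only: measure_empty)
    show "(\<lambda>k. measure M {x \<in> space M. e < cmod (fs k x - f x)}) \<longlonglongrightarrow> 0"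
    proof (rule tendsto_sandwich[OF _ _ tendsto_const lim0])
      show "\<forall>\<^sub>F k in sequentially. 0 \<le> measure M {x \<in> space M. e < cmod (fs k x - f x)}" by simp
      show "\<forall>\<^sub>F k in sequentially. measure M {x \<in> space M. e < cmod (fs k x - f x)} \<le> measure M ((\<Union>n. A n) - Fk k)"
      proof (intro always_eventually allI finite_measure_mono)
        fix k
        show "(\<Union>n. A n) - Fk k \<in> sets M" using U Fs by auto
        show "{x \<in> space M. e < cmod (fs k x - f x)} \<subseteq> (\<Union>n. A n) - Fk k"
        proof
          fix x assume x: "x \<in> {x \<in> space M. e < cmod (fs k x - f x)}"
          show "x \<in> (\<Union>n. A n) - Fk k"
          proof (cases "x \<in> Fk k")
            case True thus ?thesis using x e unfolding fs_def by simp
          next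
            case False
            hence "f x \<noteq> 1" using x e unfolding fs_def by auto
            thus ?thesis using h x False by auto
          qed
        qed
      qed
    qed
  qed
  have "(\<lambda>k. l2norm (\<lambda>n. \<phi> (fs k) v n - \<phi> f v n)) \<longlonglongrightarrow> 0" by (rule R_cont[OF fsT f conv v])
  hence "(\<lambda>k. l2norm (\<lambda>n. v n - \<phi> f v n)) \<longlonglongrightarrow> 0" using fs1 by simp
  hence "l2norm (\<lambda>n. v n - \<phi> f v n) = 0" by (simp add: LIMSEQ_const_iff)
  hence "v = \<phi> f v" by (rule l2norm_zero[OF v rep_l2[OF R f v]])
  thus "\<phi> f v = v" by simp
qed

lemma nullrep_eq: assumes D: "nullrep M I \<phi> D" and f: "f \<in> Tfun M" and g: "g \<in> Tfun M"
  and e: "\<forall>x\<in>space M - D. f x = g x" and v: "v \<in> l2 I"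
  shows "\<phi> f v = \<phi> g v"
proof -
  define h where "h = (\<lambda>x. f x * cnj (g x))"
  have hT: "h \<in> Tfun M" unfolding h_def by (rule Tfun_mult[OF f Tfun_cnj[OF g]])
  have g1: "\<forall>x\<in>space M. g x * cnj (g x) = 1" using g unit_cnj unfolding Tfun_def by auto
  have "\<forall>x\<in>space M. x \<notin> D \<longrightarrow> h x = 1" using e g1 unfolding h_def by auto
  hence h1: "\<phi> h w = w" if "w \<in> l2 I" for w using D hT that unfolding nullrep_def by blast
  have "AE x in M. f x = h x * g x" using g1 unfolding h_def by (auto simp: algebra_simps)
  hence "\<phi> f v = \<phi> (\<lambda>x. h x * g x) v" by (rule R_ae[OF f Tfun_mult[OF hT g] _ v])
  also have "\<dots> = \<phi> h (\<phi> g v)" by (rule R_mult[OF hT g v])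
  also have "\<dots> = \<phi> g v" by (rule h1[OF rep_l2[OF R g v]])
  finally show ?thesis .
qed

end


lemma exists_A0:
  assumes R: "cont_unitary_rep M I \<phi>" and F: "finite_measure M"
  shows "\<exists>A0. nullrep M I \<phi> A0 \<and> (\<forall>B. nullrep M I \<phi> B \<longrightarrow> measure M (B - A0) = 0)"
proof -
  interpret finite_measure M by (rule F)
  define S where "S = (\<lambda>A. measure M A) ` {A. nullrep M I \<phi> A}"
  have Sne: "S \<noteq> {}" unfolding S_def using nullrep_empty[OF R F] by auto
  have Sbdd: "bdd_above S" unfolding S_def using bounded_measure by (auto intro!: bdd_aboveI)
  have "\<forall>n::nat. \<exists>A. nullrep M I \<phi> A \<and> Sup S - 1 / Suc n < measure M A"
  proof
    fix n :: nat
    have "Sup S - 1 / Suc n < Sup S" by simp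
    then obtain s where "s \<in> S" "Sup S - 1 / Suc n < s" using less_cSupD[OF Sne] by blast
    thus "\<exists>A. nullrep M I \<phi> A \<and> Sup S - 1 / Suc n < measure M A" unfolding S_def by auto
  qed
  then obtain A where A: "\<And>n. nullrep M I \<phi> (A n)" and Am: "\<And>n. Sup S - 1 / Suc n < measure M (A n)"
    by metis
  define A0 where "A0 = (\<Union>n. A n)"
  have A0: "nullrep M I \<phi> A0" unfolding A0_def by (rule nullrep_UN[OF R F A])
  have A0s: "A0 \<in> sets M" using A0 by (simp add: nullrep_def)
  have "Sup S \<le> measure M A0"
  proof (rule field_le_epsilon)
    fix e :: real assume e: "0 < e"
    then obtain n where n: "1 / Suc n < e" using nat_approx_posE by blast
    have "measure M (A n) \<le> measure M A0"
      using A0s by (intro finite_measure_mono) (auto simp: A0_def)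
    thus "Sup S \<le> measure M A0 + e" using Am[of n] n by linarith
  qed
  moreover have "\<forall>B. nullrep M I \<phi> B \<longrightarrow> measure M (B - A0) = 0"
  proof (intro allI impI)
    fix B assume B: "nullrep M I \<phi> B"
    have Bs: "B \<in> sets M" using B by (simp add: nullrep_def)
    have "nullrep M I \<phi> (A0 \<union> B)" by (rule nullrep_Un[OF R F A0 B])
    hence "measure M (A0 \<union> B) \<le> Sup S" unfolding S_def using Sbdd S_def by (auto intro!: cSup_upper)
    moreover have "measure M (A0 \<union> (B - A0)) = measure M A0 + measure M (B - A0)"
      using A0s Bs by (intro finite_measure_Union) auto
    hence "measure M (A0 \<union> B) = measure M A0 + measure M (B - A0)" by (simp only: Un_Diff_cancel)
    ultimately show "measure M (B - A0) = 0" using \<open>Sup S \<le> measure M A0\<close> measure_nonneg[of M "B - A0"] by linarith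
  qed
  ultimately show ?thesis using A0 by blast
qed



theorem mainTheorem2:
  fixes \<mu> :: "'a::polish_space measure" and I :: "nat set"
    and \<phi> :: "('a \<Rightarrow> complex) \<Rightarrow> (nat \<Rightarrow> complex) \<Rightarrow> (nat \<Rightarrow> complex)"
  assumes "sets \<mu> = sets borel" and "prob_space \<mu>" and "cont_unitary_rep \<mu> I \<phi>"
  shows "\<exists>\<nu>. sets \<nu> = sets borel \<and> finite_measure \<nu> \<and> absolutely_continuous \<mu> \<nu> \<and>
             factors_through \<mu> \<nu> I \<phi> \<and>
             (\<forall>\<nu>'. sets \<nu>' = sets borel \<and> finite_measure \<nu>' \<and> absolutely_continuous \<mu> \<nu>' \<and>
                    factors_through \<mu> \<nu>' I \<phi> \<longrightarrow> absolutely_continuous \<nu>' \<nu>)"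
proof -
  note R = assms(3)
  have F: "finite_measure \<mu>" using assms(2) unfolding prob_space_def by simp
  interpret finite_measure \<mu> by (rule F)
  obtain A0 where A0: "nullrep \<mu> I \<phi> A0" and A0m: "\<And>B. nullrep \<mu> I \<phi> B \<Longrightarrow> measure \<mu> (B - A0) = 0"
    using exists_A0[OF R F] by blast
  have A0s: "A0 \<in> sets \<mu>" using A0 by (simp add: nullrep_def)
  have Ss: "space \<mu> - A0 \<in> sets \<mu>" using A0s by auto
  define \<nu> where "\<nu> = density \<mu> (indicator (space \<mu> - A0))"
  have s\<nu>: "sets \<nu> = sets \<mu>" unfolding \<nu>_def by simp
  have sp\<nu>: "space \<nu> = space \<mu>" unfolding \<nu>_def by simp
  have fin: "finite_measure \<nu>" unfolding \<nu>_def by (rule finite_measure_restricted[OF Ss])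
  have ac: "absolutely_continuous \<mu> \<nu>" unfolding \<nu>_def
    by (rule absolutely_continuousI_density) (rule borel_measurable_indicator[OF Ss])
  have em: "emeasure \<nu> B = emeasure \<mu> ((space \<mu> - A0) \<inter> B)" if "B \<in> sets \<mu>" for B
    unfolding \<nu>_def by (rule emeasure_restricted[OF Ss that])
  have me: "measure \<nu> B = measure \<mu> ((space \<mu> - A0) \<inter> B)" if "B \<in> sets \<mu>" for B
    unfolding \<nu>_def by (rule measure_restricted[OF Ss that])
  have N1: "B \<in> null_sets \<nu>" if B: "nullrep \<mu> I \<phi> B" for B
  proof -
    have Bs: "B \<in> sets \<mu>" using B by (simp add: nullrep_def)
    have "(space \<mu> - A0) \<inter> B = B - A0" using sets.sets_into_space[OF Bs] by auto
    hence "emeasure \<nu> B = emeasure \<mu> (B - A0)" using em[OF Bs] by simp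
    also have "\<dots> = 0" using A0m[OF B] by (simp add: emeasure_eq_measure)
    finally show ?thesis using Bs s\<nu> by (simp add: null_sets_def)
  qed
  have N2: "nullrep \<mu> I \<phi> B" if B: "B \<in> null_sets \<nu>" for B
  proof -
    have Bs: "B \<in> sets \<mu>" using B s\<nu> by auto
    have "(space \<mu> - A0) \<inter> B = B - A0" using sets.sets_into_space[OF Bs] by auto
    hence "emeasure \<mu> (B - A0) = 0" using em[OF Bs] B by (simp add: null_sets_def)
    hence "B - A0 \<in> null_sets \<mu>" using Bs A0s by auto
    hence "nullrep \<mu> I \<phi> (B - A0)" by (rule nullrep_null[OF R F])
    hence "nullrep \<mu> I \<phi> ((B - A0) \<union> A0)" by (rule nullrep_Un[OF R F _ A0])
    thus ?thesis by (rule nullrep_mono[OF R F _ _ Bs]) auto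
  qed
  have TT: "Tfun \<nu> = Tfun \<mu>" by (rule Tfun_cong[OF s\<nu>])
  have A0\<nu>: "A0 \<in> null_sets \<nu>" by (rule N1[OF A0])
  have CR: "cont_unitary_rep \<nu> I \<phi>"
    unfolding cont_unitary_rep_def TT
  proof (intro conjI)
    show "\<forall>f\<in>Tfun \<mu>. \<forall>g\<in>Tfun \<mu>. (AE x in \<nu>. f x = g x) \<longrightarrow> (\<forall>v\<in>l2 I. \<phi> f v = \<phi> g v)"
    proof (intro ballI impI)
      fix f g v assume f: "f \<in> Tfun \<mu>" and g: "g \<in> Tfun \<mu>" and ae: "AE x in \<nu>. f x = g x" and v: "v \<in> l2 I"
      have [measurable]: "f \<in> borel_measurable \<mu>" "g \<in> borel_measurable \<mu>" using f g by (auto simp: Tfun_def)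
      define D where "D = {x\<in>space \<mu>. f x \<noteq> g x}"
      have Ds: "D \<in> sets \<mu>" unfolding D_def by measurable
      have "emeasure \<nu> D = 0"
        using ae AE_iff_measurable[of D \<nu> "\<lambda>x. f x = g x"] Ds s\<nu> sp\<nu> unfolding D_def by auto
      hence "D \<in> null_sets \<nu>" using Ds s\<nu> by auto
      hence "nullrep \<mu> I \<phi> D" by (rule N2)
      thus "\<phi> f v = \<phi> g v" by (rule nullrep_eq[OF R F _ f g _ v]) (auto simp: D_def)
    qed
    show "\<forall>f\<in>Tfun \<mu>. unitary_on I (\<phi> f)" using R unfolding cont_unitary_rep_def by blast
    show "\<forall>f\<in>Tfun \<mu>. \<forall>g\<in>Tfun \<mu>. \<forall>v\<in>l2 I. \<phi> (\<lambda>x. f x * g x) v = \<phi> f (\<phi> g v)"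
      using R unfolding cont_unitary_rep_def by blast
    show "\<forall>fs f v. (\<forall>k. fs k \<in> Tfun \<mu>) \<longrightarrow> f \<in> Tfun \<mu> \<longrightarrow> conv_in_measure \<nu> fs f \<longrightarrow> v \<in> l2 I \<longrightarrow>
        (\<lambda>k. l2norm (\<lambda>n. \<phi> (fs k) v n - \<phi> f v n)) \<longlonglongrightarrow> 0"
    proof (intro allI impI)
      fix fs f v assume fs: "\<forall>k. fs k \<in> Tfun \<mu>" and f: "f \<in> Tfun \<mu>" and c: "conv_in_measure \<nu> fs f" and v: "v \<in> l2 I"
      define gs where "gs = (\<lambda>k x. if x \<in> A0 then f x else fs k x)"
      have gsT: "\<And>k. gs k \<in> Tfun \<mu>" unfolding gs_def using fs by (intro Tfun_if[OF A0s f]) auto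
      have eq: "\<phi> (gs k) v = \<phi> (fs k) v" for k
        by (rule nullrep_eq[OF R F A0 gsT]) (use fs v in \<open>auto simp: gs_def\<close>)
      have c2: "conv_in_measure \<mu> gs f"
        unfolding conv_in_measure_def
      proof (intro allI impI)
        fix e :: real assume e: "e > 0"
        have "measure \<mu> {x \<in> space \<mu>. e < cmod (gs k x - f x)} = measure \<nu> {x \<in> space \<nu>. e < cmod (fs k x - f x)}" for k
        proof -
          have [measurable]: "f \<in> borel_measurable \<mu>" "fs k \<in> borel_measurable \<mu>" using f fs by (auto simp: Tfun_def)
          have Es: "{x \<in> space \<mu>. e < cmod (fs k x - f x)} \<in> sets \<mu>" by measurable
          have "{x \<in> space \<mu>. e < cmod (gs k x - f x)} = (space \<mu> - A0) \<inter> {x \<in> space \<mu>. e < cmod (fs k x - f x)}"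
            using e by (auto simp: gs_def)
          thus ?thesis using me[OF Es] sp\<nu> by simp
        qed
        thus "(\<lambda>k. measure \<mu> {x \<in> space \<mu>. e < cmod (gs k x - f x)}) \<longlonglongrightarrow> 0"
          using c e unfolding conv_in_measure_def by simp
      qed
      have "(\<lambda>k. l2norm (\<lambda>n. \<phi> (gs k) v n - \<phi> f v n)) \<longlonglongrightarrow> 0" by (rule R_cont[OF R F gsT f c2 v])
      thus "(\<lambda>k. l2norm (\<lambda>n. \<phi> (fs k) v n - \<phi> f v n)) \<longlonglongrightarrow> 0" using eq by simp
    qed
  qed
  have FT: "factors_through \<mu> \<nu> I \<phi>" unfolding factors_through_def using CR by blast
  have MIN: "absolutely_continuous \<nu>' \<nu>" if h: "sets \<nu>' = sets borel \<and> finite_measure \<nu>' \<and> absolutely_continuous \<mu> \<nu>' \<and>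
                    factors_through \<mu> \<nu>' I \<phi>" for \<nu>'
  proof -
    have s': "sets \<nu>' = sets \<mu>" using h assms(1) by simp
    have sp': "space \<nu>' = space \<mu>" by (rule sets_eq_imp_space_eq[OF s'])
    obtain \<psi> where \<psi>: "cont_unitary_rep \<nu>' I \<psi>" and eq: "\<forall>f\<in>Tfun \<mu>. \<forall>v\<in>l2 I. \<phi> f v = \<psi> f v"
      using h unfolding factors_through_def by blast
    have T': "Tfun \<nu>' = Tfun \<mu>" by (rule Tfun_cong[OF s'])
    show ?thesis unfolding absolutely_continuous_def
    proof
      fix B assume B: "B \<in> null_sets \<nu>'"
      have "nullrep \<mu> I \<phi> B" unfolding nullrep_def
      proof (intro conjI ballI impI)
        show "B \<in> sets \<mu>" using B s' by auto
        fix f v assume f: "f \<in> Tfun \<mu>" and h1: "\<forall>x\<in>space \<mu>. x \<notin> B \<longrightarrow> f x = 1" and v: "v \<in> l2 I"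
        have "AE x in \<nu>'. f x = 1" by (rule AE_I'[OF B]) (use h1 sp' in auto)
        hence "\<psi> f v = \<psi> (\<lambda>x. 1) v"
        proof -
          have "finite_measure \<nu>'" using h by blast
          moreover have "f \<in> Tfun \<nu>'" using f T' by simp
          ultimately show ?thesis using R_ae[OF \<psi>, of f "\<lambda>x. 1" v] Tfun_one \<open>AE x in \<nu>'. f x = 1\<close> v by blast
        qed
        moreover have "\<phi> f v = \<psi> f v" "\<phi> (\<lambda>x. 1) v = \<psi> (\<lambda>x. 1) v" using eq f v Tfun_one[of \<mu>] by auto
        ultimately show "\<phi> f v = v" using rep_one[OF R v] by simp
      qed
      thus "B \<in> null_sets \<nu>" by (rule N1)
    qed
  qed
  show ?thesis using s\<nu> assms(1) fin ac FT MIN by blast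
qed

end
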